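(* Assume $V$ satisfies (V1)–(V3). Then $|\nabla V(x)\cdot x|\to0$ as $|x|\to\infty$.
   Context: $N\ge3$, $\alpha\in(0,N)$. (V1) $V$ continuous, $V\ge0$, $V_\infty:=\lim_{|x|\to\infty}V(x)$ exists and is $>0$; (V2) $V(x)\le V_\infty$ for all $x$; (V3) $V\in C^1(\mathbb R^N)$ and there is $\theta\in[0,1)$ such that for every $x\neq0$ the map $t\mapsto \frac{NV(tx)+\nabla V(tx)\cdot(tx)}{t^\alpha}+\frac{(N-2)^3\theta}{4t^{\alpha+2}|x|^2}$ is nonincreasing on $(0,\infty)$. *)

theory Defs
  imports "HOL-Analysis.Analysis"
begin

end

theory Submission imports Defs begin

lemma key:
  fixes V :: "real ^ 'n \<Rightarrow> real" and gradV :: "real ^ 'n \<Rightarrow> real ^ 'n"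
    and \<alpha> Vinf \<theta> \<delta> \<epsilon> N :: real and y :: "real ^ 'n"
  assumes Ndef: "N = real CARD('n)"
    and alpha: "0 < \<alpha>" and dim: "CARD('n) \<ge> 3" and th: "0 \<le> \<theta>"
    and Vi: "0 \<le> Vinf"
    and V2: "\<And>x. V x \<le> Vinf"
    and grad: "\<And>x. (V has_derivative (\<lambda>h. gradV x \<bullet> h)) (at x)"
    and mono: "\<And>x s t. x \<noteq> 0 \<Longrightarrow> 0 < s \<Longrightarrow> s \<le> t \<Longrightarrow>
        (real CARD('n) * V (t *\<^sub>R x) + gradV (t *\<^sub>R x) \<bullet> (t *\<^sub>R x)) / t powr \<alpha>
          + (real CARD('n) - 2) ^ 3 * \<theta> / (4 * t powr (\<alpha> + 2) * (norm x)\<^sup>2)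
        \<le> (real CARD('n) * V (s *\<^sub>R x) + gradV (s *\<^sub>R x) \<bullet> (s *\<^sub>R x)) / s powr \<alpha>
          + (real CARD('n) - 2) ^ 3 * \<theta> / (4 * s powr (\<alpha> + 2) * (norm x)\<^sup>2)"
    and y: "y \<noteq> 0" and d: "0 < \<delta>" "\<delta> \<le> 1/2" and eps: "0 \<le> \<epsilon>"
    and near: "\<And>z. norm z \<ge> norm y / 2 \<Longrightarrow> \<bar>V z - Vinf\<bar> \<le> \<epsilon>"
  shows "\<bar>gradV y \<bullet> y\<bar> \<le> (1/((1-\<delta>) powr \<alpha>) - 1)*(N*Vinf) + (N*Vinf - N*Vinf/((1+\<delta>) powr \<alpha>))
     + (2 powr \<alpha> + 1)*4*\<epsilon>/\<delta> + N*\<epsilon> + ((N-2)^3*\<theta>/4/(norm y)^2)*(2 powr (\<alpha>+2)+1)"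
proof -
  define A where "A = N*Vinf"
  define Kc where "Kc = (N-2)^3*\<theta>/4/(norm y)^2"
  have N3: "N \<ge> 3" using dim Ndef by simp
  have A0: "A \<ge> 0" using N3 Vi by (simp add: A_def)
  have Kc0: "Kc \<ge> 0" using N3 th by (simp add: Kc_def)
  have ny: "norm y > 0" using y by simp
  have Kt: "(real CARD('n) - 2) ^ 3 * \<theta> / (4 * t powr (\<alpha> + 2) * (norm y)\<^sup>2) = Kc / t powr (\<alpha>+2)"
    if "t > 0" for t using that ny by (simp add: Kc_def Ndef field_simps)
  have deriv: "((\<lambda>t. V (t *\<^sub>R y)) has_real_derivative (gradV (t *\<^sub>R y) \<bullet> y)) (at t)" for t
  proof -
    have "((\<lambda>t. t *\<^sub>R y) has_derivative (\<lambda>h. h *\<^sub>R y)) (at t)"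
      by (intro derivative_eq_intros) auto
    from has_derivative_compose[OF this grad]
    have "((\<lambda>t. V (t *\<^sub>R y)) has_derivative (\<lambda>h. gradV (t *\<^sub>R y) \<bullet> (h *\<^sub>R y))) (at t)" .
    moreover have "(\<lambda>h. gradV (t *\<^sub>R y) \<bullet> (h *\<^sub>R y)) = (*) (gradV (t *\<^sub>R y) \<bullet> y)"
      by (auto simp: mult.commute)
    ultimately show ?thesis by (simp add: has_field_derivative_def)
  qed
  have ns: "norm (t *\<^sub>R y) \<ge> norm y / 2" if "t \<ge> 1/2" for t
    using that ny by (simp add: mult_right_mono)
  have Mb: "\<exists>\<xi>. a < \<xi> \<and> \<xi> < b \<and> \<bar>gradV (\<xi> *\<^sub>R y) \<bullet> y\<bar> \<le> 2*\<epsilon>/\<delta>"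
    if "1/2 \<le> a" "b = a + \<delta>" for a b
  proof -
    from MVT2[of a b "\<lambda>t. V (t *\<^sub>R y)", OF _ deriv] d that obtain \<xi> where
      xi: "a < \<xi>" "\<xi> < b" "V (b *\<^sub>R y) - V (a *\<^sub>R y) = (b - a) * (gradV (\<xi> *\<^sub>R y) \<bullet> y)"
      by auto
    have "\<bar>V (b *\<^sub>R y) - V (a *\<^sub>R y)\<bar> \<le> 2*\<epsilon>"
      using near[OF ns, of a] near[OF ns, of b] that d by linarith
    then have "\<delta> * \<bar>gradV (\<xi> *\<^sub>R y) \<bullet> y\<bar> \<le> 2*\<epsilon>" using xi that d by (simp add: abs_mult)
    then have "\<bar>gradV (\<xi> *\<^sub>R y) \<bullet> y\<bar> \<le> 2*\<epsilon>/\<delta>" using d by (simp add: field_simps)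
    then show ?thesis using xi by blast
  qed
  obtain \<xi>1 where x1: "1-\<delta> < \<xi>1" "\<xi>1 < 1" and g1: "\<bar>gradV (\<xi>1 *\<^sub>R y) \<bullet> y\<bar> \<le> 2*\<epsilon>/\<delta>"
    using Mb[of "1-\<delta>" 1] d by auto
  define g1v where "g1v = gradV (\<xi>1 *\<^sub>R y) \<bullet> y"
  define p where "p = \<xi>1 powr \<alpha>"
  define q where "q = \<xi>1 powr (\<alpha>+2)"
  have x1p: "\<xi>1 > 0" using x1 d by linarith
  have m1: "N * V y + gradV y \<bullet> y + Kc \<le> (N * V (\<xi>1 *\<^sub>R y) + \<xi>1 * g1v)/p + Kc/q"
    using mono[OF y x1p, of 1] x1 Kt[of 1] Kt[OF x1p]
    by (simp add: Ndef p_def q_def g1v_def)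
  have pge: "p \<ge> (1-\<delta>) powr \<alpha>" unfolding p_def using x1 d alpha by (intro powr_mono2) auto
  have pd0: "(1-\<delta>) powr \<alpha> > 0" using d by simp
  have P1: "1/p \<le> 1/((1-\<delta>) powr \<alpha>)" using pge pd0 by (simp add: frac_le)
  have P2: "1/((1-\<delta>) powr \<alpha>) \<le> 2 powr \<alpha>"
  proof -
    have "(1/2) powr \<alpha> \<le> (1-\<delta>) powr \<alpha>" using d alpha by (intro powr_mono2) auto
    then have "1/((1-\<delta>) powr \<alpha>) \<le> 1/((1/2) powr \<alpha>)" using pd0 by (simp add: frac_le)
    also have "\<dots> = 2 powr \<alpha>" by (simp add: powr_divide)
    finally show ?thesis .
  qed
  have P3: "1 \<le> 1/((1-\<delta>) powr \<alpha>)"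
  proof -
    have "(1-\<delta>) powr \<alpha> \<le> 1 powr \<alpha>" using d alpha by (intro powr_mono2) auto
    then show ?thesis using pd0 by simp
  qed
  have Q1: "1/q \<le> 2 powr (\<alpha>+2)"
  proof -
    have "(1/2) powr (\<alpha>+2) \<le> \<xi>1 powr (\<alpha>+2)" using x1 d alpha by (intro powr_mono2) auto
    then have "1/q \<le> 1/((1/2) powr (\<alpha>+2))" using x1p by (simp add: q_def frac_le)
    also have "\<dots> = 2 powr (\<alpha>+2)" by (simp add: powr_divide)
    finally show ?thesis .
  qed
  have S1: "N * V (\<xi>1 *\<^sub>R y) + \<xi>1 * g1v \<le> A + 2*\<epsilon>/\<delta>"
  proof -
    have "N * V (\<xi>1 *\<^sub>R y) \<le> A" using V2 N3 by (simp add: A_def)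
    moreover have "\<xi>1 * g1v \<le> 2*\<epsilon>/\<delta>"
    proof -
      have "\<xi>1 * g1v \<le> \<bar>\<xi>1 * g1v\<bar>" by simp
      also have "\<dots> \<le> \<bar>g1v\<bar>" using x1 x1p by (simp add: abs_mult mult_left_le_one_le)
      finally show ?thesis using g1 g1v_def by simp
    qed
    ultimately show ?thesis by linarith
  qed
  have p0: "p > 0" using x1p by (simp add: p_def)
  have e0: "2*\<epsilon>/\<delta> \<ge> 0" using eps d by simp
  have "(N * V (\<xi>1 *\<^sub>R y) + \<xi>1 * g1v)/p \<le> (A + 2*\<epsilon>/\<delta>)/p"
    using S1 p0 by (simp add: divide_right_mono)
  also have "\<dots> = (A + 2*\<epsilon>/\<delta>) * (1/p)" by simp
  also have "\<dots> \<le> (A + 2*\<epsilon>/\<delta>) * (1/((1-\<delta>) powr \<alpha>))"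
    using P1 A0 e0 by (intro mult_left_mono) auto
  finally have U1: "(N * V (\<xi>1 *\<^sub>R y) + \<xi>1 * g1v)/p \<le> A * (1/((1-\<delta>) powr \<alpha>)) + 2*\<epsilon>/\<delta> * 2 powr \<alpha>"
    using mult_left_mono[OF P2 e0] by (simp add: algebra_simps)
  have U2: "Kc/q \<le> Kc * 2 powr (\<alpha>+2)" using mult_left_mono[OF Q1 Kc0] by simp
  have Vy: "V y \<ge> Vinf - \<epsilon>" using near[of y] ny by simp
  have NVy: "N * V y \<ge> A - N*\<epsilon>" using Vy N3 mult_left_mono[OF Vy, of N] by (simp add: A_def algebra_simps)
  have upper: "gradV y \<bullet> y \<le> (1/((1-\<delta>) powr \<alpha>) - 1)*A + 2*\<epsilon>/\<delta> * 2 powr \<alpha> + Kc * 2 powr (\<alpha>+2) + N*\<epsilon>"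
    using m1 U1 U2 NVy Kc0 by (simp add: algebra_simps)
  obtain \<xi>2 where x2: "1 < \<xi>2" "\<xi>2 < 1+\<delta>" and g2: "\<bar>gradV (\<xi>2 *\<^sub>R y) \<bullet> y\<bar> \<le> 2*\<epsilon>/\<delta>"
    using Mb[of 1 "1+\<delta>"] d by auto
  define g2v where "g2v = gradV (\<xi>2 *\<^sub>R y) \<bullet> y"
  define p2 where "p2 = \<xi>2 powr \<alpha>"
  define q2 where "q2 = \<xi>2 powr (\<alpha>+2)"
  have x2p: "\<xi>2 > 0" using x2 by linarith
  have m2: "(N * V (\<xi>2 *\<^sub>R y) + \<xi>2 * g2v)/p2 + Kc/q2 \<le> N * V y + gradV y \<bullet> y + Kc"
    using mono[OF y _ , of 1 \<xi>2] x2 Kt[of 1] Kt[OF x2p]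
    by (simp add: Ndef p2_def q2_def g2v_def)
  have q20: "Kc/q2 \<ge> 0" using Kc0 x2p by (simp add: q2_def)
  have p21: "p2 \<ge> 1" using x2 alpha unfolding p2_def by (intro ge_one_powr_ge_zero) auto
  have p2le: "p2 \<le> (1+\<delta>) powr \<alpha>" unfolding p2_def using x2 alpha by (intro powr_mono2) auto
  define D where "D = N*\<epsilon> + 4*\<epsilon>/\<delta>"
  have D0: "D \<ge> 0" using N3 eps d by (simp add: D_def)
  have S2: "N * V (\<xi>2 *\<^sub>R y) + \<xi>2 * g2v \<ge> A - D"
  proof -
    have Vz: "V (\<xi>2 *\<^sub>R y) \<ge> Vinf - \<epsilon>" using near[OF ns, of \<xi>2] x2 by simp
    have "N * V (\<xi>2 *\<^sub>R y) \<ge> A - N*\<epsilon>" using mult_left_mono[OF Vz, of N] N3 by (simp add: A_def algebra_simps)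
    moreover have "- (4*\<epsilon>/\<delta>) \<le> \<xi>2 * g2v"
    proof -
      have "\<bar>\<xi>2 * g2v\<bar> \<le> 2 * \<bar>g2v\<bar>" using x2 d by (simp add: abs_mult mult_right_mono)
      also have "\<dots> \<le> 4*\<epsilon>/\<delta>" using g2 g2v_def by simp
      finally show ?thesis by linarith
    qed
    ultimately show ?thesis by (simp add: D_def)
  qed
  have "A/((1+\<delta>) powr \<alpha>) - D \<le> A/p2 - D/p2"
  proof -
    have "A/((1+\<delta>) powr \<alpha>) \<le> A/p2" using A0 p21 p2le by (intro divide_left_mono) (auto intro!: mult_pos_pos)
    moreover have "D/p2 \<le> D" using D0 p21 by (simp add: divide_le_eq mult_le_cancel_left1)
    ultimately show ?thesis by linarith
  qed
  also have "\<dots> = (A - D)/p2" by (simp add: diff_divide_distrib)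
  also have "\<dots> \<le> (N * V (\<xi>2 *\<^sub>R y) + \<xi>2 * g2v)/p2" using S2 p21 by (intro divide_right_mono) auto
  finally have L1: "A/((1+\<delta>) powr \<alpha>) - D \<le> (N * V (\<xi>2 *\<^sub>R y) + \<xi>2 * g2v)/p2" .
  have NVy2: "N * V y \<le> A" using V2 N3 by (simp add: A_def)
  have lower: "gradV y \<bullet> y \<ge> A/((1+\<delta>) powr \<alpha>) - A - D - Kc"
    using m2 L1 NVy2 q20 by linarith
  have c1: "2*\<epsilon>/\<delta> * 2 powr \<alpha> \<le> (2 powr \<alpha> + 1)*4*\<epsilon>/\<delta>"
    using eps d by (simp add: field_simps)
  have c2: "4*\<epsilon>/\<delta> \<le> (2 powr \<alpha> + 1)*4*\<epsilon>/\<delta>"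
    using eps d by (simp add: field_simps)
  have c3: "Kc * 2 powr (\<alpha>+2) \<le> Kc * (2 powr (\<alpha>+2) + 1)" "Kc \<le> Kc * (2 powr (\<alpha>+2) + 1)"
    using Kc0 by (simp_all add: algebra_simps)
  have c4: "0 \<le> (1/((1-\<delta>) powr \<alpha>) - 1)*A" using P3 A0 by simp
  have c5: "0 \<le> A - A/((1+\<delta>) powr \<alpha>)"
  proof -
    have "1 \<le> (1+\<delta>) powr \<alpha>" using d alpha by (intro ge_one_powr_ge_zero) auto
    then have "A/((1+\<delta>) powr \<alpha>) \<le> A" using A0 by (simp add: divide_le_eq mult_le_cancel_left1)
    then show ?thesis by simp
  qed
  have "N*\<epsilon> \<ge> 0" using N3 eps by simp
  then show ?thesis
    using upper lower c1 c2 c3 c4 c5 unfolding A_def[symmetric] Kc_def[symmetric] D_def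
    by (simp add: abs_le_iff)
qed
theorem lemma2p0:
  fixes V :: "real ^ 'n \<Rightarrow> real"
    and gradV :: "real ^ 'n \<Rightarrow> real ^ 'n"
    and \<alpha> V_inf \<theta> :: real
  assumes dim: "CARD('n) \<ge> 3"
    and alpha: "0 < \<alpha>" "\<alpha> < real CARD('n)"
    and V1_cont: "continuous_on UNIV V"
    and V1_nonneg: "\<And>x. V x \<ge> 0"
    and V1_lim: "(V \<longlongrightarrow> V_inf) at_infinity"
    and V1_pos: "V_inf > 0"
    and V2: "\<And>x. V x \<le> V_inf"
    and V3_grad: "\<And>x. (V has_derivative (\<lambda>h. gradV x \<bullet> h)) (at x)"
    and V3_C1: "continuous_on UNIV gradV"
    and V3_theta: "0 \<le> \<theta>" "\<theta> < 1"
    and V3_mono: "\<And>x s t. x \<noteq> 0 \<Longrightarrow> 0 < s \<Longrightarrow> s \<le> t \<Longrightarrow>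
        (real CARD('n) * V (t *\<^sub>R x) + gradV (t *\<^sub>R x) \<bullet> (t *\<^sub>R x)) / t powr \<alpha>
          + (real CARD('n) - 2) ^ 3 * \<theta> / (4 * t powr (\<alpha> + 2) * (norm x)\<^sup>2)
        \<le> (real CARD('n) * V (s *\<^sub>R x) + gradV (s *\<^sub>R x) \<bullet> (s *\<^sub>R x)) / s powr \<alpha>
          + (real CARD('n) - 2) ^ 3 * \<theta> / (4 * s powr (\<alpha> + 2) * (norm x)\<^sup>2)"
  shows "((\<lambda>x. \<bar>gradV x \<bullet> x\<bar>) \<longlongrightarrow> 0) at_infinity"
proof (rule tendstoI)
  fix e :: real assume e: "0 < e"
  define N where "N = real CARD('n)"
  have N3: "N \<ge> 3" using dim N_def by simp
  have Vi: "0 \<le> V_inf" using V1_pos by simp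
  define h where "h = (\<lambda>d::real. (1/((1-d) powr \<alpha>) - 1)*(N*V_inf) + (N*V_inf - N*V_inf/((1+d) powr \<alpha>)))"
  have "(h \<longlongrightarrow> (1/((1-0) powr \<alpha>) - 1)*(N*V_inf) + (N*V_inf - N*V_inf/((1+0) powr \<alpha>))) (at_right 0)"
    unfolding h_def by (intro tendsto_intros) auto
  then have "(h \<longlongrightarrow> 0) (at_right 0)" by simp
  then have "eventually (\<lambda>d. dist (h d) 0 < e/2) (at_right 0)" using e by (intro tendstoD) auto
  then have "\<exists>b>0. \<forall>d>0. d < b \<longrightarrow> dist (h d) 0 < e/2"
    by (simp add: eventually_at_right_field)
  then obtain b where b: "b > 0" "\<And>d. d > 0 \<Longrightarrow> d < b \<Longrightarrow> \<bar>h d\<bar> < e/2"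
    by auto
  define \<delta> where "\<delta> = min (b/2) (1/2)"
  have d: "0 < \<delta>" "\<delta> \<le> 1/2" using b by (auto simp: \<delta>_def)
  have hd: "h \<delta> < e/2" proof -
    have "\<delta> < b" using b(1) unfolding \<delta>_def by linarith
    then have "\<bar>h \<delta>\<bar> < e/2" using b(2) d by blast
    then show ?thesis by linarith
  qed
  define T where "T = 2 powr \<alpha> + 1 + N"
  have T0: "T > 0" using N3 by (simp add: T_def add_pos_nonneg)
  define \<epsilon> where "\<epsilon> = e*\<delta>/(16*T)"
  have eps: "\<epsilon> > 0" using e d T0 by (simp add: \<epsilon>_def)
  have "eventually (\<lambda>z. dist (V z) V_inf < \<epsilon>) at_infinity" using V1_lim eps by (intro tendstoD) auto
  then obtain bV where bV: "\<And>z. bV \<le> norm z \<Longrightarrow> \<bar>V z - V_inf\<bar> < \<epsilon>"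
    unfolding eventually_at_infinity dist_real_def by auto
  define c0 where "c0 = (N-2)^3*\<theta>/4"
  have c00: "c0 \<ge> 0" using N3 V3_theta by (simp add: c0_def)
  define X where "X = 2 powr (\<alpha>+2) + 1"
  have X0: "X > 0" by (simp add: X_def add_pos_nonneg)
  define R2 where "R2 = c0*X*8/e + 1"
  have R2: "R2 \<ge> 1" using c00 X0 e by (simp add: R2_def)
  have epsterm: "(2 powr \<alpha> + 1)*4*\<epsilon>/\<delta> + N*\<epsilon> < e/3"
  proof -
    have "(2 powr \<alpha> + 1)*4*\<epsilon>/\<delta> = (2 powr \<alpha> + 1)*e/(4*T)"
      using d T0 by (simp add: \<epsilon>_def field_simps)
    also have "\<dots> \<le> T*e/(4*T)" using e T0 N3 by (intro divide_right_mono mult_right_mono) (auto simp: T_def)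
    also have "\<dots> = e/4" using T0 by simp
    finally have 1: "(2 powr \<alpha> + 1)*4*\<epsilon>/\<delta> \<le> e/4" .
    have "N*\<epsilon> = (N*\<delta>)*e/(16*T)" by (simp add: \<epsilon>_def)
    also have "\<dots> \<le> T*e/(16*T)" using e T0 N3 d
    proof -
      have "N*\<delta> \<le> N" using N3 d by (simp add: mult_left_le)
      moreover have "0 \<le> 2 powr \<alpha>" by simp
      ultimately have "N*\<delta> \<le> T" unfolding T_def by linarith
      then show ?thesis using e T0 by (intro divide_right_mono mult_right_mono) auto
    qed
    also have "\<dots> = e/16" using T0 by simp
    finally show ?thesis using 1 e by linarith
  qed
  show "eventually (\<lambda>y. dist \<bar>gradV y \<bullet> y\<bar> 0 < e) at_infinity"
    unfolding eventually_at_infinity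
  proof (intro exI allI impI)
    fix y :: "real ^ 'n" assume ny: "max (2*bV) R2 \<le> norm y"
    then have ny1: "norm y \<ge> 1" "norm y \<ge> R2" using R2 by auto
    then have y: "y \<noteq> 0" by auto
    have near: "\<bar>V z - V_inf\<bar> \<le> \<epsilon>" if "norm z \<ge> norm y / 2" for z
      using bV[of z] that ny by auto
    have main: "\<bar>gradV y \<bullet> y\<bar> \<le> h \<delta> + ((2 powr \<alpha> + 1)*4*\<epsilon>/\<delta> + N*\<epsilon>) + c0/(norm y)^2 * X"
      using key[OF N_def alpha(1) dim V3_theta(1) Vi V2 V3_grad V3_mono y d eps[THEN less_imp_le] near]
      by (simp add: h_def c0_def X_def)
    have "c0/(norm y)^2 * X \<le> c0*X/R2"
    proof -
      have "norm y \<le> (norm y)^2" using ny1 mult_left_mono[of 1 "norm y" "norm y"] by (simp add: power2_eq_square)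
      then have "R2 \<le> (norm y)^2" using ny1 by linarith
      then have "c0*X/(norm y)^2 \<le> c0*X/R2" using c00 X0 R2 by (intro divide_left_mono) (auto intro!: mult_pos_pos)
      then show ?thesis by simp
    qed
    also have "\<dots> < e/8"
    proof -
      have "c0*X*8 < R2*e" using e by (simp add: R2_def field_simps)
      then show ?thesis using R2 by (simp add: field_simps)
    qed
    finally have kb: "c0/(norm y)^2 * X < e/8" .
    have "\<bar>gradV y \<bullet> y\<bar> < e" using main hd epsterm kb e by linarith
    then show "dist \<bar>gradV y \<bullet> y\<bar> 0 < e" by simp
  qed
qed

end
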